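(* (1) For each $g\in\Bbbk[x]$ there is a unique derivation $d_g:A\to A$ with $d_g(x)=0$ and $d_g(y)=g$; it is locally nilpotent, it is inner if and only if $g\in x^N\Bbbk[x]$, and $\exp(td_g)=\phi_{tg,1}$ for all $t\in\Bbbk$. (2) Every locally nilpotent derivation $d$ of $A$ equals $d_g$ for exactly one $g\in\Bbbk[x]$.
   Context: Let $\Bbbk$ be a field of characteristic zero and $N\geq1$ an integer. Let $A=A_N$ be the $\Bbbk$-algebra generated by $x,y$ subject to the relation $yx-xy=x^N$. A derivation $d$ is locally nilpotent if for each $a\in A$ there is $n$ with $d^n(a)=0$. For $f\in\Bbbk[x]$, $\lambda\in\Bbbk^\times$, $\phi_{f,\lambda}$ denotes the algebra automorphism of $A$ with $\phi_{f,\lambda}(x)=\lambda x$, $\phi_{f,\lambda}(y)=\lambda^{N-1}y+f$. *)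

theory Defs
  imports "HOL-Computational_Algebra.Polynomial"
begin

text \<open>Concrete model of A_N = k<x,y>/(yx - xy = x^N) via its PBW basis:
  an element is a polynomial in y with left coefficients in k[x],
  a = sum_j (coeff a j) y^j, represented as 'k poly poly (outer variable y).
  Multiplication uses y^j p = sum_i (j choose i) delta^i(p) y^(j-i),
  where delta = x^N d/dx, i.e. [y,p] = x^N p'.\<close>

definition deltaN :: "nat \<Rightarrow> 'k::field poly \<Rightarrow> 'k poly" where
  "deltaN N p = monom 1 N * pderiv p"

definition mulA :: "nat \<Rightarrow> 'k::field poly poly \<Rightarrow> 'k poly poly \<Rightarrow> 'k poly poly" where
  "mulA N a b = (\<Sum>j\<le>degree a. \<Sum>l\<le>degree b. \<Sum>i\<le>j.
      monom (coeff a j * (of_nat (j choose i) * (deltaN N ^^ i) (coeff b l))) (j - i + l))"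

definition scaleA :: "'k::field \<Rightarrow> 'k poly poly \<Rightarrow> 'k poly poly" where
  "scaleA c a = map_poly (smult c) a"

definition xA :: "'k::field poly poly" where
  "xA = [: monom 1 1 :]"

definition yA :: "'k::field poly poly" where
  "yA = monom 1 1"

definition powA :: "nat \<Rightarrow> 'k::field poly poly \<Rightarrow> nat \<Rightarrow> 'k poly poly" where
  "powA N b j = (mulA N b ^^ j) 1"

definition is_derivation :: "nat \<Rightarrow> ('k::field poly poly \<Rightarrow> 'k poly poly) \<Rightarrow> bool" where
  "is_derivation N D \<longleftrightarrow>
     (\<forall>a b. D (a + b) = D a + D b) \<and>
     (\<forall>c a. D (scaleA c a) = scaleA c (D a)) \<and>
     (\<forall>a b. D (mulA N a b) = mulA N (D a) b + mulA N a (D b))"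

definition locally_nilpotent :: "('k::field poly poly \<Rightarrow> 'k poly poly) \<Rightarrow> bool" where
  "locally_nilpotent D \<longleftrightarrow> (\<forall>a. \<exists>n. (D ^^ n) a = 0)"

definition inner_derivation :: "nat \<Rightarrow> ('k::field poly poly \<Rightarrow> 'k poly poly) \<Rightarrow> bool" where
  "inner_derivation N D \<longleftrightarrow> (\<exists>u. \<forall>a. D a = mulA N u a - mulA N a u)"

definition dg :: "nat \<Rightarrow> 'k::field poly \<Rightarrow> ('k poly poly \<Rightarrow> 'k poly poly)" where
  "dg N g = (THE D. is_derivation N D \<and> D xA = 0 \<and> D yA = [:g:])"

definition expA :: "'k::field_char_0 \<Rightarrow> ('k poly poly \<Rightarrow> 'k poly poly) \<Rightarrow> 'k poly poly \<Rightarrow> 'k poly poly" where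
  "expA t D a = (\<Sum>n < (LEAST m. (D ^^ m) a = 0). scaleA (t ^ n / fact n) ((D ^^ n) a))"

text \<open>phi_{f,lambda}: the algebra map with x |-> lambda x, y |-> lambda^(N-1) y + f\<close>
definition phiA :: "nat \<Rightarrow> 'k::field poly \<Rightarrow> 'k \<Rightarrow> 'k poly poly \<Rightarrow> 'k poly poly" where
  "phiA N f lam a = (\<Sum>j\<le>degree a.
      mulA N [: pcompose (coeff a j) [:0, lam:] :]
             (powA N (scaleA (lam ^ (N - 1)) yA + [:f:]) j))"

end

theory Submission
  imports Defs
begin

lemma deltaN_0[simp]: "deltaN N 0 = 0" by (simp add: deltaN_def)
lemma deltaN_add: "deltaN N (p + q) = deltaN N p + deltaN N q"
  by (simp add: deltaN_def pderiv_add algebra_simps)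
lemma deltaN_mult: "deltaN N (p * q) = deltaN N p * q + p * deltaN N q"
  by (simp add: deltaN_def pderiv_mult algebra_simps)
lemma deltaN_const[simp]: "deltaN N [:c:] = 0" by (simp add: deltaN_def)
lemma deltaN_1[simp]: "deltaN N 1 = 0" by (simp add: deltaN_def)

definition Yop :: "nat \<Rightarrow> 'k::field poly poly \<Rightarrow> 'k poly poly" where
  "Yop N f = pCons 0 f + map_poly (deltaN N) f"

lemma coeff_Yop: "coeff (Yop N f) n = (if n = 0 then 0 else coeff f (n - 1)) + deltaN N (coeff f n)"
  by (simp add: Yop_def coeff_map_poly coeff_pCons')

lemma Yop_add: "Yop N (f + g) = Yop N f + Yop N g"
  by (simp add: poly_eq_iff coeff_Yop deltaN_add)

lemma Yop_0[simp]: "Yop N 0 = 0"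
  by (simp add: poly_eq_iff coeff_Yop)

lemma Yop_smult: "Yop N (smult p f) = smult (deltaN N p) f + smult p (Yop N f)"
  by (simp add: poly_eq_iff coeff_Yop deltaN_mult algebra_simps)

lemma deltaN_of_nat_mult: "deltaN N (of_nat c * q) = of_nat c * deltaN N q"
  by (simp add: deltaN_def pderiv_mult)

lemma Yop_smult_of_nat: "Yop N (smult (of_nat c) f) = smult (of_nat c) (Yop N f)"
  by (simp add: Yop_smult deltaN_def)

lemma gen_leib:
  fixes T :: "'r::comm_ring_1 poly \<Rightarrow> 'r poly"
  assumes add: "\<And>x y. T (x + y) = T x + T y"
  and leib: "\<And>u v. T (P u v) = P (S u) v + P u (R v)"
  shows "(T ^^ n) (P u v) = (\<Sum>k\<le>n. smult (of_nat (n choose k)) (P ((S ^^ k) u) ((R ^^ (n - k)) v)))"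
proof (induction n)
  case 0
  then show ?case by simp
next
  case (Suc n)
  have T0: "T 0 = 0" using add[of 0 0] by simp
  have Tsum: "T (sum f A) = (\<Sum>x\<in>A. T (f x))" for f :: "nat \<Rightarrow> 'r poly" and A
    by (induction A rule: infinite_finite_induct) (auto simp: T0 add)
  have sc: "T (smult (of_nat c) x) = smult (of_nat c) (T x)" for c x
  proof (induction c)
    case 0 then show ?case by (simp add: T0)
  next
    case (Suc c) then show ?case by (simp add: smult_add_left add)
  qed
  define X where "X k = P ((S ^^ k) u) ((R ^^ (Suc n - k)) v)" for k
  have "(T ^^ Suc n) (P u v) = T (\<Sum>k\<le>n. smult (of_nat (n choose k)) (P ((S ^^ k) u) ((R ^^ (n - k)) v)))"
    using Suc by simp
  also have "\<dots> = (\<Sum>k\<le>n. smult (of_nat (n choose k)) (X (Suc k))) + (\<Sum>k\<le>n. smult (of_nat (n choose k)) (X k))"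
    unfolding Tsum sc leib X_def
    by (simp add: smult_add_right sum.distrib Suc_diff_le)
  also have "(\<Sum>k\<le>n. smult (of_nat (n choose k)) (X k)) = (\<Sum>k\<le>Suc n. smult (of_nat (n choose k)) (X k))"
    by (simp add: sum.atMost_Suc binomial_eq_0)
  also have "\<dots> = X 0 + (\<Sum>k\<le>n. smult (of_nat (n choose Suc k)) (X (Suc k)))"
    by (subst sum.atMost_Suc_shift) simp
  also have "(\<Sum>k\<le>n. smult (of_nat (n choose k)) (X (Suc k))) + (X 0 + (\<Sum>k\<le>n. smult (of_nat (n choose Suc k)) (X (Suc k))))
      = X 0 + (\<Sum>k\<le>n. smult (of_nat (Suc n choose Suc k)) (X (Suc k)))"
    by (simp add: sum.distrib smult_add_left algebra_simps)
  also have "\<dots> = (\<Sum>k\<le>Suc n. smult (of_nat (Suc n choose k)) (X k))"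
    by (subst sum.atMost_Suc_shift) (simp del: sum.atMost_Suc)
  finally show ?case by (simp add: X_def)
qed


lemma Yop_pow_0[simp]: "(Yop N ^^ j) 0 = 0"
  by (induction j) auto

lemma Yop_pow_add: "(Yop N ^^ j) (f + g) = (Yop N ^^ j) f + (Yop N ^^ j) g"
  by (induction j) (auto simp: Yop_add)

lemma Yop_pow_sum: "(Yop N ^^ j) (sum f A) = (\<Sum>x\<in>A. (Yop N ^^ j) (f x))"
  by (induction A rule: infinite_finite_induct) (auto simp: Yop_pow_add)

lemma Yop_sum: "Yop N (sum f A) = (\<Sum>x\<in>A. Yop N (f x))"
  using Yop_pow_sum[of 1] by simp

lemma Yop_pow_smult:
  "(Yop N ^^ j) (smult p f) = (\<Sum>i\<le>j. smult (of_nat (j choose i)) (smult ((deltaN N ^^ i) p) ((Yop N ^^ (j - i)) f)))"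
  by (rule gen_leib[where P=smult and S="deltaN N" and R="Yop N" and T="Yop N"]) (simp_all add: Yop_add Yop_smult)

lemma Yop_monom1: "Yop N (monom 1 l) = monom 1 (Suc l)"
  by (simp add: poly_eq_iff coeff_Yop coeff_monom)

lemma Yop_pow_monom1: "(Yop N ^^ j) (monom 1 l) = monom 1 (j + l)"
  by (induction j) (auto simp: Yop_monom1)

definition rho :: "nat \<Rightarrow> 'k::field poly poly \<Rightarrow> 'k poly poly \<Rightarrow> 'k poly poly" where
  "rho N a f = (\<Sum>j\<le>degree a. smult (coeff a j) ((Yop N ^^ j) f))"

lemma rho_bound:
  assumes "degree a \<le> K"
  shows "rho N a f = (\<Sum>j\<le>K. smult (coeff a j) ((Yop N ^^ j) f))"
  unfolding rho_def
  by (rule sum.mono_neutral_left) (use assms in \<open>auto simp: coeff_eq_0 not_le\<close>)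

lemma smult_monom1: "smult (p::'a::comm_semiring_1) (monom 1 l) = monom p l"
  by (simp add: smult_monom)

lemma smult_sum_right: "smult c (sum f A) = (\<Sum>x\<in>A. smult c (f x))"
  by (induction A rule: infinite_finite_induct) (auto simp: smult_add_right)

lemma poly_as_smult_sum: "(b::'a::comm_semiring_1 poly) = (\<Sum>l\<le>degree b. smult (coeff b l) (monom 1 l))"
  unfolding smult_monom1 by (rule poly_as_sum_of_monoms[symmetric])

lemma mulA_eq_rho: "mulA N a b = rho N a b"
proof -
  have "rho N a b = (\<Sum>j\<le>degree a. smult (coeff a j) ((Yop N ^^ j) (\<Sum>l\<le>degree b. smult (coeff b l) (monom 1 l))))"
    unfolding rho_def by (simp only: poly_as_smult_sum[of b, symmetric])
  also have "\<dots> = (\<Sum>j\<le>degree a. \<Sum>l\<le>degree b. \<Sum>i\<le>j.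
      monom (coeff a j * (of_nat (j choose i) * (deltaN N ^^ i) (coeff b l))) (j - i + l))"
  proof (rule sum.cong[OF refl])
    fix j assume "j \<in> {..degree a}"
    have "smult (coeff a j) ((Yop N ^^ j) (\<Sum>l\<le>degree b. smult (coeff b l) (monom 1 l)))
      = (\<Sum>l\<le>degree b. smult (coeff a j) ((Yop N ^^ j) (smult (coeff b l) (monom 1 l))))"
      by (simp add: Yop_pow_sum smult_sum_right)
    also have "\<dots> = (\<Sum>l\<le>degree b. \<Sum>i\<le>j.
      monom (coeff a j * (of_nat (j choose i) * (deltaN N ^^ i) (coeff b l))) (j - i + l))"
      unfolding Yop_pow_smult Yop_pow_monom1 smult_sum_right by (simp add: smult_monom mult.assoc)
    finally show "smult (coeff a j) ((Yop N ^^ j) (\<Sum>l\<le>degree b. smult (coeff b l) (monom 1 l))) = (\<Sum>l\<le>degree b. \<Sum>i\<le>j.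
      monom (coeff a j * (of_nat (j choose i) * (deltaN N ^^ i) (coeff b l))) (j - i + l))" .
  qed
  finally show ?thesis by (simp only: mulA_def)
qed


lemma rho_0_left[simp]: "rho N 0 f = 0" by (simp add: rho_def)

lemma rho_add_left: "rho N (a + b) f = rho N a f + rho N b f"
proof -
  define K where "K = max (degree a) (degree b)"
  have "degree (a + b) \<le> K" "degree a \<le> K" "degree b \<le> K"
    unfolding K_def by (auto intro: degree_add_le_max[THEN order.trans])
  then show ?thesis
    by (simp add: rho_bound[of _ K] smult_add_left sum.distrib)
qed

lemma rho_sum_left: "rho N (sum g A) f = (\<Sum>x\<in>A. rho N (g x) f)"
  by (induction A rule: infinite_finite_induct) (auto simp: rho_add_left)

lemma rho_add_right: "rho N a (f + g) = rho N a f + rho N a g"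
  by (simp add: rho_def Yop_pow_add smult_add_right sum.distrib)

lemma rho_0_right[simp]: "rho N a 0 = 0"
  by (simp add: rho_def)

lemma rho_sum_right: "rho N a (sum g A) = (\<Sum>x\<in>A. rho N a (g x))"
  by (induction A rule: infinite_finite_induct) (auto simp: rho_add_right)

lemma rho_smult_left: "rho N (smult p a) f = smult p (rho N a f)"
proof -
  have "degree (smult p a) \<le> degree a" by (rule degree_smult_le)
  then show ?thesis
    by (simp add: rho_bound[of _ "degree a"] smult_sum_right)
qed

lemma rho_monom: "rho N (monom p m) f = smult p ((Yop N ^^ m) f)"
proof -
  have "degree (monom p m) \<le> m" by (rule degree_monom_le)
  then have "rho N (monom p m) f = (\<Sum>j\<le>m. smult (coeff (monom p m) j) ((Yop N ^^ j) f))"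
    by (rule rho_bound)
  also have "\<dots> = smult p ((Yop N ^^ m) f)"
    by (subst sum.remove[of _ m]) (auto simp: coeff_monom)
  finally show ?thesis .
qed

lemma rho_const: "rho N [:p:] f = smult p f"
  using rho_monom[of N p 0 f] by (simp add: monom_0)

lemma Yop_pow_1: "(Yop N ^^ j) 1 = monom 1 j"
  using Yop_pow_monom1[where N=N and j=j and l=0] by (simp add: monom_0 one_pCons)

lemma Ypow_comp: "(Yop N ^^ m) ((Yop N ^^ l) f) = (Yop N ^^ (m + l)) f"
  by (simp add: funpow_add)

lemma rho_1_right: "rho N a 1 = a"
proof -
  have "rho N a 1 = (\<Sum>j\<le>degree a. smult (coeff a j) (monom 1 j))"
    unfolding rho_def by (simp add: Yop_pow_1)
  then show ?thesis using poly_as_smult_sum[of a] by simp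
qed

lemma rho_1_left: "rho N 1 f = f"
  using rho_const[of N 1 f] by (simp add: one_pCons[symmetric])

lemma rho_rho_monom: "rho N (rho N a (monom p l)) f = rho N a (rho N (monom p l) f)"
proof -
  have m: "monom p l = smult p (monom 1 l)" by (simp add: smult_monom1)
  have "rho N (rho N a (monom p l)) f
     = rho N (\<Sum>j\<le>degree a. smult (coeff a j) (\<Sum>i\<le>j. smult (of_nat (j choose i)) (smult ((deltaN N ^^ i) p) (monom 1 (j - i + l))))) f"
    unfolding rho_def[of N a] m Yop_pow_smult Yop_pow_monom1 by simp
  also have "\<dots> = (\<Sum>j\<le>degree a. smult (coeff a j) (\<Sum>i\<le>j. smult (of_nat (j choose i)) (smult ((deltaN N ^^ i) p) ((Yop N ^^ (j - i + l)) f))))"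
    by (simp add: rho_sum_left rho_smult_left smult_monom1 rho_monom)
  also have "\<dots> = rho N a (rho N (monom p l) f)"
    unfolding rho_monom rho_def[of N a] Yop_pow_smult by (simp only: Ypow_comp)
  finally show ?thesis .
qed

lemma rho_rho: "rho N (rho N a b) f = rho N a (rho N b f)"
proof -
  have "rho N (rho N a b) f = rho N (rho N a (\<Sum>l\<le>degree b. monom (coeff b l) l)) f"
    by (simp only: poly_as_sum_of_monoms)
  also have "\<dots> = (\<Sum>l\<le>degree b. rho N (rho N a (monom (coeff b l) l)) f)"
    by (simp only: rho_sum_right rho_sum_left)
  also have "\<dots> = (\<Sum>l\<le>degree b. rho N a (rho N (monom (coeff b l) l) f))"
    by (simp only: rho_rho_monom)
  also have "\<dots> = rho N a (rho N (\<Sum>l\<le>degree b. monom (coeff b l) l) f)"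
    by (simp only: rho_sum_right rho_sum_left)
  also have "\<dots> = rho N a (rho N b f)"
    by (simp only: poly_as_sum_of_monoms)
  finally show ?thesis .
qed


lemma mulA_assoc: "mulA N (mulA N a b) c = mulA N a (mulA N b c)"
  by (simp add: mulA_eq_rho rho_rho)
lemma mulA_add_left: "mulA N (a + b) c = mulA N a c + mulA N b c"
  by (simp add: mulA_eq_rho rho_add_left)
lemma mulA_add_right: "mulA N a (b + c) = mulA N a b + mulA N a c"
  by (simp add: mulA_eq_rho rho_add_right)
lemma mulA_0_left[simp]: "mulA N 0 a = 0" by (simp add: mulA_eq_rho)
lemma mulA_0_right[simp]: "mulA N a 0 = 0" by (simp add: mulA_eq_rho)
lemma mulA_1_left[simp]: "mulA N 1 a = a" by (simp add: mulA_eq_rho rho_1_left)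
lemma mulA_1_right[simp]: "mulA N a 1 = a" by (simp add: mulA_eq_rho rho_1_right)
lemma mulA_sum_left: "mulA N (sum g A) f = (\<Sum>x\<in>A. mulA N (g x) f)"
  by (simp add: mulA_eq_rho rho_sum_left)
lemma mulA_sum_right: "mulA N a (sum g A) = (\<Sum>x\<in>A. mulA N a (g x))"
  by (simp add: mulA_eq_rho rho_sum_right)
lemma mulA_const_left: "mulA N [:p:] f = smult p f"
  by (simp add: mulA_eq_rho rho_const)
lemma mulA_smult_left: "mulA N (smult p a) f = smult p (mulA N a f)"
  by (simp add: mulA_eq_rho rho_smult_left)
lemma mulA_monom_left: "mulA N (monom p j) f = smult p ((Yop N ^^ j) f)"
  by (simp add: mulA_eq_rho rho_monom)
lemma mulA_yA_left: "mulA N yA f = Yop N f"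
  by (simp add: yA_def mulA_monom_left)
lemma mulA_xA_left: "mulA N xA f = smult (monom 1 1) f"
  by (simp add: xA_def mulA_const_left)
lemma mulA_diff_left: "mulA N (a - b) c = mulA N a c - mulA N b c"
  using mulA_add_left[of N "a - b" b c] by (simp add: algebra_simps)
lemma mulA_diff_right: "mulA N a (b - c) = mulA N a b - mulA N a c"
  using mulA_add_right[of N a "b - c" c] by (simp add: algebra_simps)
lemma mulA_minus_left: "mulA N (- a) c = - mulA N a c"
  using mulA_diff_left[of N 0 a c] by simp
lemma mulA_minus_right: "mulA N a (- c) = - mulA N a c"
  using mulA_diff_right[of N a 0 c] by simp

lemma Yop_pow_const_smult: "(Yop N ^^ j) (smult [:c:] f) = smult [:c:] ((Yop N ^^ j) f)"
  by (induction j) (auto simp: Yop_smult)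

lemma mulA_smult_const_right: "mulA N a (smult [:c:] f) = smult [:c:] (mulA N a f)"
  by (simp add: mulA_eq_rho rho_def Yop_pow_const_smult smult_sum_right mult.commute)

lemma scaleA_eq: "scaleA c a = smult [:c:] a"
  by (simp add: scaleA_def poly_eq_iff coeff_map_poly)

lemma mulA_scaleA_left: "mulA N (scaleA c a) f = scaleA c (mulA N a f)"
  by (simp add: scaleA_eq mulA_smult_left)
lemma mulA_scaleA_right: "mulA N a (scaleA c f) = scaleA c (mulA N a f)"
  by (simp add: scaleA_eq mulA_smult_const_right)

lemma mulA_monom1_right: "mulA N a (monom 1 l) = a * monom 1 l"
proof -
  have "mulA N a (monom 1 l) = (\<Sum>j\<le>degree a. monom (coeff a j) j * monom 1 l)"
    by (simp add: mulA_eq_rho rho_def Yop_pow_monom1 smult_monom mult_monom)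
  also have "\<dots> = a * monom 1 l"
    by (subst (2) poly_as_sum_of_monoms[of a, symmetric]) (simp add: sum_distrib_right)
  finally show ?thesis .
qed

lemma mulA_yA_right: "mulA N a yA = a * monom 1 1"
  by (simp add: yA_def mulA_monom1_right)

lemma Yop_degree: "degree (Yop N f) \<le> Suc (degree f)"
  by (rule degree_le) (auto simp: coeff_Yop coeff_eq_0)

lemma Yop_coeff_top: "coeff (Yop N f) (Suc (degree f)) = lead_coeff f"
  by (simp add: coeff_Yop coeff_eq_0)

lemma Yop_pow_degree: "degree ((Yop N ^^ j) f) \<le> degree f + j \<and> coeff ((Yop N ^^ j) f) (degree f + j) = lead_coeff f"
proof (induction j)
  case 0 then show ?case by simp
next
  case (Suc j)
  let ?g = "(Yop N ^^ j) f"
  show ?case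
  proof (cases "degree ?g = degree f + j")
    case True
    then show ?thesis using Yop_degree[of N ?g] Yop_coeff_top[of N ?g] Suc by simp
  next
    case False
    then have lt: "degree ?g < degree f + j" using Suc by simp
    then have "degree (Yop N ?g) < degree f + Suc j" using Yop_degree[of N ?g] by simp
    moreover have "coeff ?g (degree f + j) = 0" using lt coeff_eq_0 by blast
    ultimately show ?thesis using Suc coeff_eq_0 by force
  qed
qed

lemma mulA_top: "coeff (mulA N a b) (degree a + degree b) = lead_coeff a * lead_coeff b"
  and mulA_degree: "degree (mulA N a b) \<le> degree a + degree b"
proof -
  have c: "coeff (smult (coeff a j) ((Yop N ^^ j) b)) (degree a + degree b) = (if j = degree a then lead_coeff a * lead_coeff b else 0)"
    if "j \<le> degree a" for j
  proof (cases "j = degree a")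
    case True then show ?thesis using Yop_pow_degree[where N=N and j=j and f=b] by (simp add: add.commute)
  next
    case False
    then have "degree ((Yop N ^^ j) b) < degree a + degree b" using Yop_pow_degree[where N=N and j=j and f=b] that by simp
    then show ?thesis using False by (simp add: coeff_eq_0)
  qed
  have "coeff (mulA N a b) (degree a + degree b) = (\<Sum>j\<le>degree a. coeff (smult (coeff a j) ((Yop N ^^ j) b)) (degree a + degree b))"
    by (simp only: mulA_eq_rho rho_def coeff_sum)
  also have "\<dots> = (\<Sum>j\<le>degree a. if j = degree a then lead_coeff a * lead_coeff b else 0)"
    by (rule sum.cong[OF refl]) (rule c, simp)
  also have "\<dots> = lead_coeff a * lead_coeff b" by simp
  finally show "coeff (mulA N a b) (degree a + degree b) = lead_coeff a * lead_coeff b" .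
  show "degree (mulA N a b) \<le> degree a + degree b"
    unfolding mulA_eq_rho rho_def
  proof (rule degree_sum_le[THEN order.trans])
    show "finite {..degree a}" by simp
  next
    show "(\<And>j. j \<in> {..degree a} \<Longrightarrow> degree (smult (coeff a j) ((Yop N ^^ j) b)) \<le> degree a + degree b)"
      using Yop_pow_degree[where N=N and f=b] degree_smult_le order.trans
      by (smt (verit) add.commute add_le_cancel_left atMost_iff)
  qed simp
qed

lemma mulA_eq_0_iff: "mulA N a b = 0 \<longleftrightarrow> a = 0 \<or> b = 0"
proof
  assume "mulA N a b = 0"
  then have "lead_coeff a * lead_coeff b = 0" using mulA_top[of N a b] by simp
  then show "a = 0 \<or> b = 0" by simp
qed auto


section \<open>Derivations\<close>

context
  fixes N :: nat and D :: "'k::field poly poly \<Rightarrow> 'k poly poly"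
  assumes der: "is_derivation N D"
begin

lemma der_add: "D (a + b) = D a + D b" using der by (simp add: is_derivation_def)
lemma der_scaleA: "D (scaleA c a) = scaleA c (D a)" using der by (simp add: is_derivation_def)
lemma der_mul: "D (mulA N a b) = mulA N (D a) b + mulA N a (D b)" using der by (simp add: is_derivation_def)
lemma der_0: "D 0 = 0" using der_add[of 0 0] by (metis add.right_neutral add_left_cancel)
lemma der_diff: "D (a - b) = D a - D b" using der_add[of "a - b" b] by simp
lemma der_sum: "D (sum f A) = (\<Sum>x\<in>A. D (f x))"
  by (induction A rule: infinite_finite_induct) (auto simp: der_0 der_add)
lemma der_1: "D 1 = 0" using der_mul[of 1 1] by (metis add.right_neutral add_left_cancel mulA_1_left mulA_1_right)
lemma der_scalar: "D [:[:c:]:] = 0"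
proof -
  have "scaleA c 1 = [:[:c:]:]" by (simp add: scaleA_eq one_pCons)
  then show ?thesis using der_scaleA[of c 1] der_1 by (simp add: scaleA_eq)
qed
lemma der_pow_0: "(D ^^ n) 0 = 0" by (induction n) (auto simp: der_0)
lemma der_pow_add: "(D ^^ n) (a + b) = (D ^^ n) a + (D ^^ n) b" by (induction n) (auto simp: der_add)
lemma der_pow_diff: "(D ^^ n) (a - b) = (D ^^ n) a - (D ^^ n) b" by (induction n) (auto simp: der_diff)
lemma der_pow_sum: "(D ^^ n) (sum f A) = (\<Sum>x\<in>A. (D ^^ n) (f x))"
  by (induction A rule: infinite_finite_induct) (auto simp: der_pow_0 der_pow_add)
lemma der_pow_scaleA: "(D ^^ n) (scaleA c a) = scaleA c ((D ^^ n) a)" by (induction n) (auto simp: der_scaleA)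

lemma der_const: "D [:p:] = 0" if "D xA = 0"
proof (induction p)
  case 0 then show ?case using der_0 by simp
next
  case (pCons c q)
  have "[:pCons c q:] = scaleA c 1 + mulA N [:q:] xA"
    by (simp add: scaleA_eq mulA_const_left xA_def monom_Suc)
  then show ?case using pCons that by (simp add: der_add der_scalar der_mul der_1 scaleA_eq)
qed

end

lemma der_ext:
  assumes d1: "is_derivation N D1" and d2: "is_derivation N D2"
    and x: "D1 xA = D2 xA" and y: "D1 yA = D2 yA"
  shows "D1 = D2"
proof
  fix a
  have c: "D1 [:p:] = D2 [:p:]" for p
  proof (induction p)
    case 0 then show ?case using der_0[OF d1] der_0[OF d2] by simp
  next
    case (pCons c q)
    have e: "[:pCons c q:] = scaleA c 1 + mulA N [:q:] xA"
      by (simp add: scaleA_eq mulA_const_left xA_def monom_Suc)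
    show ?case unfolding e using pCons x
      by (simp add: der_add[OF d1] der_scalar[OF d1] der_mul[OF d1] der_1[OF d1]
                    der_add[OF d2] der_scalar[OF d2] der_mul[OF d2] der_1[OF d2] scaleA_eq)
  qed
  have m: "D1 (monom p j) = D2 (monom p j)" for p j
  proof (induction j)
    case 0 then show ?case using c by (simp add: monom_0)
  next
    case (Suc j)
    have "monom p (Suc j) = mulA N (monom p j) yA" by (simp add: mulA_yA_right mult_monom)
    then show ?case using Suc y by (simp add: der_mul[OF d1] der_mul[OF d2])
  qed
  have "D1 a = D1 (\<Sum>j\<le>degree a. monom (coeff a j) j)" by (simp only: poly_as_sum_of_monoms)
  also have "\<dots> = D2 (\<Sum>j\<le>degree a. monom (coeff a j) j)" by (simp add: der_sum[OF d1] der_sum[OF d2] m)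
  finally show "D1 a = D2 a" by (simp only: poly_as_sum_of_monoms)
qed


section \<open>The derivation d_g\<close>

fun Eg :: "nat \<Rightarrow> 'k::field poly \<Rightarrow> nat \<Rightarrow> 'k poly poly" where
  "Eg N g 0 = 0"
| "Eg N g (Suc l) = Yop N (Eg N g l) + monom g l"

definition Dg0 :: "nat \<Rightarrow> 'k::field poly \<Rightarrow> 'k poly poly \<Rightarrow> 'k poly poly" where
  "Dg0 N g f = (\<Sum>l\<le>degree f. smult (coeff f l) (Eg N g l))"

lemma Dg0_bound: "degree f \<le> K \<Longrightarrow> Dg0 N g f = (\<Sum>l\<le>K. smult (coeff f l) (Eg N g l))"
  unfolding Dg0_def
  by (rule sum.mono_neutral_left) (auto simp: coeff_eq_0 not_le)

lemma Dg0_add: "Dg0 N g (a + b) = Dg0 N g a + Dg0 N g b"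
proof -
  define K where "K = max (degree a) (degree b)"
  have "degree (a + b) \<le> K" "degree a \<le> K" "degree b \<le> K"
    unfolding K_def by (auto intro: degree_add_le_max[THEN order.trans])
  then show ?thesis
    by (simp add: Dg0_bound[of _ K] smult_add_left sum.distrib)
qed

lemma Dg0_0[simp]: "Dg0 N g 0 = 0" by (simp add: Dg0_def)

lemma Dg0_sum: "Dg0 N g (sum f A) = (\<Sum>x\<in>A. Dg0 N g (f x))"
  by (induction A rule: infinite_finite_induct) (auto simp: Dg0_add)

lemma Dg0_smult: "Dg0 N g (smult p a) = smult p (Dg0 N g a)"
proof -
  have "degree (smult p a) \<le> degree a" by (rule degree_smult_le)
  then show ?thesis
    by (simp add: Dg0_bound[of _ "degree a"] smult_sum_right)
qed

lemma Dg0_monom: "Dg0 N g (monom p l) = smult p (Eg N g l)"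
proof -
  have "degree (monom p l) \<le> l" by (rule degree_monom_le)
  then have "Dg0 N g (monom p l) = (\<Sum>j\<le>l. smult (coeff (monom p l) j) (Eg N g j))"
    by (rule Dg0_bound)
  also have "\<dots> = smult p (Eg N g l)"
    by (subst sum.remove[of _ l]) (auto simp: coeff_monom)
  finally show ?thesis .
qed

lemma Dg0_Yop_monom: "Dg0 N g (Yop N (monom p l)) = smult g (monom p l) + Yop N (Dg0 N g (monom p l))"
proof -
  have "Yop N (monom p l) = monom (deltaN N p) l + monom p (Suc l)"
    using Yop_smult[of N p "monom 1 l"] by (simp add: smult_monom1 Yop_monom1)
  then show ?thesis
    by (simp add: Dg0_add Dg0_monom Yop_smult smult_add_right smult_monom algebra_simps)
qed

lemma Dg0_Yop: "Dg0 N g (Yop N f) = smult g f + Yop N (Dg0 N g f)"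
proof -
  have "Dg0 N g (Yop N f) = Dg0 N g (Yop N (\<Sum>l\<le>degree f. monom (coeff f l) l))"
    by (simp only: poly_as_sum_of_monoms)
  also have "\<dots> = (\<Sum>l\<le>degree f. smult g (monom (coeff f l) l) + Yop N (Dg0 N g (monom (coeff f l) l)))"
    by (simp only: Yop_sum Dg0_sum Dg0_Yop_monom)
  also have "\<dots> = smult g (\<Sum>l\<le>degree f. monom (coeff f l) l) + Yop N (Dg0 N g (\<Sum>l\<le>degree f. monom (coeff f l) l))"
    by (simp only: Yop_sum Dg0_sum smult_sum_right sum.distrib)
  finally show ?thesis by (simp only: poly_as_sum_of_monoms)
qed

lemma Dg0_Ypow: "Dg0 N g ((Yop N ^^ j) b) = mulA N (Eg N g j) b + (Yop N ^^ j) (Dg0 N g b)"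
proof (induction j)
  case 0 then show ?case by simp
next
  case (Suc j)
  have "mulA N (Eg N g (Suc j)) b = Yop N (mulA N (Eg N g j) b) + smult g ((Yop N ^^ j) b)"
    by (simp add: mulA_add_left mulA_yA_left[symmetric] mulA_assoc mulA_monom_left)
  then show ?case using Suc by (simp add: Dg0_Yop Yop_add)
qed

lemma Dg0_der: "is_derivation N (Dg0 N g)"
  unfolding is_derivation_def
proof (intro conjI allI)
  fix a b
  show "Dg0 N g (a + b) = Dg0 N g a + Dg0 N g b" by (rule Dg0_add)
  show "Dg0 N g (mulA N a b) = mulA N (Dg0 N g a) b + mulA N a (Dg0 N g b)"
  proof -
    have m: "Dg0 N g (mulA N (monom p j) b) = mulA N (Dg0 N g (monom p j)) b + mulA N (monom p j) (Dg0 N g b)" for p j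
      by (simp add: mulA_monom_left Dg0_smult Dg0_Ypow Dg0_monom mulA_smult_left smult_add_right)
    have "Dg0 N g (mulA N a b) = Dg0 N g (mulA N (\<Sum>j\<le>degree a. monom (coeff a j) j) b)"
      by (simp only: poly_as_sum_of_monoms)
    also have "\<dots> = mulA N (Dg0 N g (\<Sum>j\<le>degree a. monom (coeff a j) j)) b + mulA N (\<Sum>j\<le>degree a. monom (coeff a j) j) (Dg0 N g b)"
      by (simp only: mulA_sum_left Dg0_sum m sum.distrib)
    finally show ?thesis by (simp only: poly_as_sum_of_monoms)
  qed
next
  fix c a
  show "Dg0 N g (scaleA c a) = scaleA c (Dg0 N g a)" by (simp add: scaleA_eq Dg0_smult)
qed

lemma Dg0_x: "Dg0 N g xA = 0"
  using Dg0_monom[of N g "monom 1 1" 0] by (simp add: xA_def monom_0)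

lemma Dg0_y: "Dg0 N g yA = [:g:]"
  using Dg0_monom[of N g 1 1] by (simp add: yA_def monom_0)

lemma dg_unique: "\<exists>!D. is_derivation N D \<and> D xA = 0 \<and> D yA = [:g:]"
  using Dg0_der Dg0_x Dg0_y der_ext by metis

lemma dg_eq: "dg N g = Dg0 N g"
  unfolding dg_def
  by (rule the1_equality[OF dg_unique]) (simp add: Dg0_der Dg0_x Dg0_y)

lemma Eg_degree: "Eg N g l = 0 \<or> degree (Eg N g l) < l"
proof (induction l)
  case 0 then show ?case by simp
next
  case (Suc l)
  have "degree (Eg N g (Suc l)) \<le> l"
  proof -
    have "degree (Yop N (Eg N g l)) \<le> l"
      using Suc Yop_degree[of N "Eg N g l"] by auto
    moreover have "degree (monom g l) \<le> l" by (rule degree_monom_le)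
    ultimately show ?thesis by (simp add: degree_add_le)
  qed
  then show ?case by simp
qed

lemma Dg0_degree: "Dg0 N g f = 0 \<or> degree (Dg0 N g f) < degree f"
proof (cases "degree f = 0")
  case True
  then show ?thesis by (simp add: Dg0_def)
next
  case False
  have h0: "degree (smult (coeff f l) (Eg N g l)) < degree f" if "l \<le> degree f" for l
    using Eg_degree[of N g l] that False degree_smult_le[of "coeff f l" "Eg N g l"] by auto
  have h: "degree (smult (coeff f l) (Eg N g l)) \<le> degree f - 1" if "l \<le> degree f" for l
    using h0[OF that] by linarith
  have "degree (Dg0 N g f) \<le> degree f - 1"
    unfolding Dg0_def by (rule degree_sum_le) (simp, rule h, simp)
  then have "degree (Dg0 N g f) < degree f" using False by linarith
  then show ?thesis by simp
qed

lemma Dg0_nil': "degree f < n \<Longrightarrow> (Dg0 N g ^^ n) f = 0"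
proof (induction n arbitrary: f)
  case 0 then show ?case by simp
next
  case (Suc m)
  show ?case
  proof (cases "Dg0 N g f = 0")
    case True
    then show ?thesis using der_pow_0[OF Dg0_der] by (simp add: funpow_Suc_right del: funpow.simps)
  next
    case False
    then have "degree (Dg0 N g f) < m" using Dg0_degree[of N g f] Suc.prems by auto
    then show ?thesis using Suc.IH by (simp add: funpow_Suc_right del: funpow.simps)
  qed
qed

lemma Dg0_nil: "(Dg0 N g ^^ Suc (degree f)) f = 0"
  by (rule Dg0_nil') simp

lemma Dg0_lnd: "locally_nilpotent (Dg0 N g)"
  unfolding locally_nilpotent_def using Dg0_nil by blast


section \<open>Inner derivations\<close>

lemma pderiv_sum': "pderiv (sum f A) = (\<Sum>x\<in>A. pderiv (f x))"
  by (induction A rule: infinite_finite_induct) (auto simp: pderiv_add)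

lemma antideriv: "\<exists>h. pderiv h = (q :: 'k::field_char_0 poly)"
proof
  let ?h = "\<Sum>k\<le>degree q. monom (coeff q k / of_nat (Suc k)) (Suc k)"
  have "pderiv ?h = (\<Sum>k\<le>degree q. monom (coeff q k) k)"
    by (simp add: pderiv_sum' pderiv_monom del: of_nat_Suc)
  then show "pderiv ?h = q" by (simp add: poly_as_sum_of_monoms)
qed

lemma ad_der: "is_derivation N (\<lambda>a. mulA N u a - mulA N a u)"
  unfolding is_derivation_def
  by (simp add: mulA_add_left mulA_add_right mulA_smult_left mulA_smult_const_right scaleA_eq
      smult_diff_right mulA_diff_left mulA_diff_right mulA_assoc)

lemma Ypow_const_top: "degree ((Yop N ^^ j) [:p:]) \<le> j \<and> coeff ((Yop N ^^ j) [:p:]) j = p"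
  using Yop_pow_degree[where N=N and j=j and f="[:p:]"] by simp

lemma Ypow_const_next: "coeff ((Yop N ^^ Suc j) [:p:]) j = of_nat (Suc j) * deltaN N p"
proof (induction j)
  case 0 then show ?case by (simp add: coeff_Yop)
next
  case (Suc j)
  have "coeff ((Yop N ^^ Suc j) [:p:]) (Suc j) = p"
    using Ypow_const_top[where N=N and j="Suc j" and p=p] by simp
  then show ?case using Suc by (simp add: coeff_Yop algebra_simps)
qed

lemma comm_x_const:
  fixes u :: "'k::field_char_0 poly poly"
  assumes "mulA N u xA = mulA N xA u"
  shows "u = [:coeff u 0:]"
proof (cases "degree u")
  case 0
  then show ?thesis by (metis degree_eq_zeroE coeff_pCons_0)
next
  case (Suc k)
  let ?x = "monom 1 1 :: 'k poly"
  have c: "coeff (mulA N u xA) k = coeff u k * ?x + coeff u (Suc k) * (of_nat (Suc k) * deltaN N ?x)"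
  proof -
    have "coeff (mulA N u xA) k = (\<Sum>j\<le>Suc k. coeff u j * coeff ((Yop N ^^ j) [:?x:]) k)"
      by (simp add: mulA_eq_rho rho_def Suc coeff_sum xA_def)
    also have "\<dots> = (\<Sum>j<k. coeff u j * coeff ((Yop N ^^ j) [:?x:]) k) + coeff u k * ?x + coeff u (Suc k) * (of_nat (Suc k) * deltaN N ?x)"
      using Ypow_const_top[where N=N and j=k and p="?x"] Ypow_const_next[where N=N and j=k and p="?x"] by (simp add: lessThan_Suc_atMost[symmetric])
    also have "(\<Sum>j<k. coeff u j * coeff ((Yop N ^^ j) [:?x:]) k) = 0"
    proof (rule sum.neutral, rule ballI)
      fix j assume "j \<in> {..<k}"
      then have "degree ((Yop N ^^ j) [:?x:]) < k" using Ypow_const_top[where N=N and j=j and p="?x"] by auto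
      then show "coeff u j * coeff ((Yop N ^^ j) [:?x:]) k = 0" by (simp add: coeff_eq_0)
    qed
    finally show ?thesis by simp
  qed
  have "coeff (mulA N xA u) k = ?x * coeff u k" by (simp add: mulA_xA_left)
  with c assms have "coeff u (Suc k) * (of_nat (Suc k) * deltaN N ?x) = 0" by (simp add: mult.commute)
  moreover have "coeff u (Suc k) \<noteq> 0"
  proof -
    have "u \<noteq> 0" using Suc by auto
    then have "lead_coeff u \<noteq> 0" by simp
    then show ?thesis using Suc by simp
  qed
  moreover have "deltaN N ?x \<noteq> 0" by (simp add: deltaN_def pderiv_monom)
  moreover have "(of_nat (Suc k) :: 'k poly) \<noteq> 0" by (metis of_nat_eq_0_iff nat.simps(3))
  ultimately show ?thesis by simp
qed

lemma Yop_const: "Yop N [:p:] = monom p 1 + [:deltaN N p:]"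
  by (simp add: poly_eq_iff coeff_Yop coeff_monom coeff_pCons')

lemma ad_const_y: "mulA N [:h:] yA - mulA N yA [:h:] = [:- deltaN N h:]"
  unfolding mulA_const_left mulA_yA_left Yop_const by (simp add: yA_def smult_monom)

lemma inner_iff:
  fixes g :: "'k::field_char_0 poly"
  shows "inner_derivation N (dg N g) \<longleftrightarrow> monom 1 N dvd g"
proof
  assume "inner_derivation N (dg N g)"
  then obtain u where u: "\<And>a. Dg0 N g a = mulA N u a - mulA N a u"
    unfolding inner_derivation_def dg_eq by blast
  have "mulA N u xA = mulA N xA u" using u[of xA] Dg0_x[of N g] by (metis eq_iff_diff_eq_0)
  then have ue: "u = [:coeff u 0:]" by (rule comm_x_const)
  have "[:g:] = [:- deltaN N (coeff u 0):]" using u[of yA] Dg0_y ue ad_const_y by metis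
  then have "g = monom 1 N * (- pderiv (coeff u 0))" by (simp add: deltaN_def)
  then show "monom 1 N dvd g" by simp
next
  assume "monom 1 N dvd g"
  then obtain q where q: "g = monom 1 N * q" by blast
  obtain h where h: "pderiv h = q" using antideriv by blast
  let ?u = "[:- h:]"
  have "Dg0 N g = (\<lambda>a. mulA N ?u a - mulA N a ?u)"
  proof (rule der_ext[OF Dg0_der ad_der])
    show "Dg0 N g xA = mulA N ?u xA - mulA N xA ?u"
      unfolding Dg0_x by (simp add: mulA_const_left xA_def)
    show "Dg0 N g yA = mulA N ?u yA - mulA N yA ?u"
      unfolding ad_const_y Dg0_y by (simp add: q deltaN_def h pderiv_minus)
  qed
  then show "inner_derivation N (dg N g)"
    unfolding inner_derivation_def dg_eq by metis
qed


section \<open>Exponential\<close>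

lemma Dg0_pow_smult: "(Dg0 N g ^^ n) (smult p f) = smult p ((Dg0 N g ^^ n) f)"
  by (induction n) (auto simp: Dg0_smult)

lemma Dg0_pow_add: "(Dg0 N g ^^ n) (a + b) = (Dg0 N g ^^ n) a + (Dg0 N g ^^ n) b"
  using der_pow_add[OF Dg0_der] by blast

lemma Dg0_pow_Yop: "(Dg0 N g ^^ Suc n) (Yop N f) = Yop N ((Dg0 N g ^^ Suc n) f) + smult (of_nat (Suc n) * g) ((Dg0 N g ^^ n) f)"
proof (induction n)
  case 0 then show ?case by (simp add: Dg0_Yop)
next
  case (Suc n)
  have "(Dg0 N g ^^ Suc (Suc n)) (Yop N f) = Dg0 N g ((Dg0 N g ^^ Suc n) (Yop N f))" by simp
  also have "\<dots> = Dg0 N g (Yop N ((Dg0 N g ^^ Suc n) f)) + smult (of_nat (Suc n) * g) ((Dg0 N g ^^ Suc n) f)"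
    unfolding Suc by (simp add: Dg0_add Dg0_smult)
  also have "\<dots> = Yop N ((Dg0 N g ^^ Suc (Suc n)) f) + smult (of_nat (Suc (Suc n)) * g) ((Dg0 N g ^^ Suc n) f)"
  proof -
    have e: "of_nat (Suc (Suc n)) * g = g + of_nat (Suc n) * g" by (simp add: algebra_simps)
    show ?thesis unfolding e smult_add_left Dg0_Yop by (simp add: add_ac)
  qed
  finally show ?case .
qed

definition cf :: "'k::field_char_0 \<Rightarrow> nat \<Rightarrow> 'k poly" where
  "cf t n = [:t ^ n / fact n:]"

definition exS :: "nat \<Rightarrow> 'k::field_char_0 poly \<Rightarrow> 'k \<Rightarrow> 'k poly poly \<Rightarrow> 'k poly poly" where
  "exS N g t f = (\<Sum>n\<le>degree f. smult (cf t n) ((Dg0 N g ^^ n) f))"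

lemma exS_bound: "degree f \<le> K \<Longrightarrow> exS N g t f = (\<Sum>n\<le>K. smult (cf t n) ((Dg0 N g ^^ n) f))"
  unfolding exS_def
  by (rule sum.mono_neutral_left) (auto simp: Dg0_nil')

lemma exS_add: "exS N g t (a + b) = exS N g t a + exS N g t b"
proof -
  define K where "K = max (degree a) (degree b)"
  have "degree (a + b) \<le> K" "degree a \<le> K" "degree b \<le> K"
    unfolding K_def by (auto intro: degree_add_le_max[THEN order.trans])
  then show ?thesis
    by (simp add: exS_bound[of _ K] Dg0_pow_add smult_add_right sum.distrib)
qed

lemma exS_0[simp]: "exS N g t 0 = 0" by (simp add: exS_def der_pow_0[OF Dg0_der])

lemma exS_sum: "exS N g t (sum f A) = (\<Sum>x\<in>A. exS N g t (f x))"
  by (induction A rule: infinite_finite_induct) (auto simp: exS_add)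

lemma exS_smult: "exS N g t (smult p f) = smult p (exS N g t f)"
proof -
  have "degree (smult p f) \<le> degree f" by (rule degree_smult_le)
  then show ?thesis
    by (simp add: exS_bound[of _ "degree f"] Dg0_pow_smult smult_sum_right mult.commute)
qed

lemma exS_1: "exS N g t 1 = 1"
  by (simp add: exS_def cf_def one_pCons[symmetric])

lemma cf_Suc:
  fixes t :: "'k::field_char_0"
  shows "cf t (Suc n) * of_nat (Suc n) = [:t:] * cf t n"
proof -
  have e: "t ^ Suc n / fact (Suc n) * of_nat (Suc n) = t * (t ^ n / fact n)"
    by (simp add: field_simps del: of_nat_Suc)
  have m: "[:a:] * [:b:] = [:a * b:]" for a b :: 'k by simp
  show ?thesis unfolding cf_def of_nat_poly m e ..
qed

lemma Yop_const_smult: "Yop N (smult [:c:] f) = smult [:c:] (Yop N f)"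
  by (simp add: Yop_smult)

lemma exS_Yop: "exS N g t (Yop N f) = Yop N (exS N g t f) + smult (smult t g) (exS N g t f)"
proof -
  define K where "K = degree f"
  define c where "c n = smult (cf t n) ((Dg0 N g ^^ n) f)" for n
  have dY: "degree (Yop N f) \<le> Suc K" using Yop_degree K_def by blast
  have tm: "smult (cf t (Suc n)) ((Dg0 N g ^^ Suc n) (Yop N f)) = Yop N (c (Suc n)) + smult (smult t g) (c n)" for n
  proof -
    have s: "cf t (Suc n) * (of_nat (Suc n) * g) = smult t g * cf t n"
    proof -
      have "cf t (Suc n) * (of_nat (Suc n) * g) = (cf t (Suc n) * of_nat (Suc n)) * g" by (simp add: mult.assoc)
      also have "\<dots> = [:t:] * cf t n * g" by (simp only: cf_Suc)
      also have "\<dots> = smult t g * cf t n" by (simp add: mult_ac)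
      finally show ?thesis .
    qed
    have y: "Yop N (smult (cf t m) h) = smult (cf t m) (Yop N h)" for m h
      by (simp add: cf_def Yop_const_smult)
    show ?thesis
      unfolding Dg0_pow_Yop smult_add_right c_def y smult_smult s ..
  qed
  have "exS N g t (Yop N f) = (\<Sum>n\<le>Suc K. smult (cf t n) ((Dg0 N g ^^ n) (Yop N f)))"
    by (rule exS_bound[OF dY])
  also have "\<dots> = smult (cf t 0) (Yop N f) + (\<Sum>n\<le>K. smult (cf t (Suc n)) ((Dg0 N g ^^ Suc n) (Yop N f)))"
    by (subst sum.atMost_Suc_shift) simp
  also have "\<dots> = Yop N (c 0) + Yop N (\<Sum>n\<le>K. c (Suc n)) + smult (smult t g) (\<Sum>n\<le>K. c n)"
    unfolding tm sum.distrib Yop_sum smult_sum_right by (simp add: c_def cf_def add.assoc one_pCons[symmetric])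
  also have "Yop N (c 0) + Yop N (\<Sum>n\<le>K. c (Suc n)) = Yop N (\<Sum>n\<le>Suc K. c n)"
    by (simp add: Yop_add sum.atMost_Suc_shift del: sum.atMost_Suc)
  also have "(\<Sum>n\<le>Suc K. c n) = exS N g t f"
    unfolding c_def by (rule exS_bound[symmetric]) (simp add: K_def)
  also have "(\<Sum>n\<le>K. c n) = exS N g t f"
    unfolding c_def K_def exS_def ..
  finally show ?thesis .
qed


lemma exS_powA: "exS N g t (monom 1 j) = powA N (yA + [:smult t g:]) j"
proof (induction j)
  case 0 then show ?case by (simp add: powA_def monom_0 one_pCons[symmetric] exS_1)
next
  case (Suc j)
  have "exS N g t (monom 1 (Suc j)) = exS N g t (Yop N (monom 1 j))" by (simp add: Yop_monom1)
  also have "\<dots> = mulA N (yA + [:smult t g:]) (exS N g t (monom 1 j))"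
    by (simp add: exS_Yop mulA_add_left mulA_yA_left mulA_const_left)
  finally show ?case using Suc by (simp add: powA_def)
qed

lemma exS_expand: "exS N g t a = (\<Sum>j\<le>degree a. smult (coeff a j) (powA N (yA + [:smult t g:]) j))"
proof -
  have "exS N g t a = exS N g t (\<Sum>l\<le>degree a. smult (coeff a l) (monom 1 l))"
    by (simp only: poly_as_smult_sum[of a, symmetric])
  then show ?thesis by (simp add: exS_sum exS_smult exS_powA)
qed

lemma phi_eq: "phiA N (smult t g) 1 a = exS N g t a"
  unfolding phiA_def exS_expand pcompose_idR
  by (simp add: mulA_const_left scaleA_eq one_pCons[symmetric])

lemma expA_eq: "expA t (dg N g) a = exS N g t a"
proof -
  let ?D = "Dg0 N g"
  define M where "M = (LEAST m. (?D ^^ m) a = 0)"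
  have z: "(?D ^^ Suc (degree a)) a = 0" by (rule Dg0_nil)
  then have MS: "M \<le> Suc (degree a)" unfolding M_def by (rule Least_le)
  have DM: "(?D ^^ M) a = 0" unfolding M_def using z by (rule LeastI)
  have big: "(?D ^^ n) a = 0" if "M \<le> n" for n
  proof -
    have "(?D ^^ n) a = (?D ^^ (n - M)) ((?D ^^ M) a)"
      using that by (metis funpow_add le_add_diff_inverse2 comp_apply)
    then show ?thesis using DM der_pow_0[OF Dg0_der] by simp
  qed
  have "expA t (dg N g) a = (\<Sum>n<M. smult (cf t n) ((?D ^^ n) a))"
    unfolding expA_def dg_eq M_def scaleA_eq cf_def ..
  also have "\<dots> = (\<Sum>n<Suc (degree a). smult (cf t n) ((?D ^^ n) a))"
    by (rule sum.mono_neutral_left) (use MS big in auto)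
  also have "\<dots> = exS N g t a" unfolding exS_def lessThan_Suc_atMost ..
  finally show ?thesis .
qed


section \<open>Locally nilpotent derivations\<close>

context
  fixes N :: nat and D :: "'k::field_char_0 poly poly \<Rightarrow> 'k poly poly"
  assumes der: "is_derivation N D"
begin

lemma der_pow_mul: "(D ^^ n) (mulA N a b) = (\<Sum>k\<le>n. smult (of_nat (n choose k)) (mulA N ((D ^^ k) a) ((D ^^ (n - k)) b)))"
  by (rule gen_leib[where T=D and P="mulA N" and S=D and R=D]) (simp_all add: der_add[OF der] der_mul[OF der])

lemma der_pow_vanish: "(D ^^ Suc m) a = 0 \<Longrightarrow> Suc m \<le> k \<Longrightarrow> (D ^^ k) a = 0"
  using der_pow_0[OF der] by (metis funpow_add le_add_diff_inverse2 comp_apply)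

lemma der_deg_mul:
  assumes am: "(D ^^ m) a \<noteq> 0" "(D ^^ Suc m) a = 0"
    and bn: "(D ^^ n) b \<noteq> 0" "(D ^^ Suc n) b = 0"
  shows "(D ^^ (m + n)) (mulA N a b) \<noteq> 0"
proof -
  have "(D ^^ (m + n)) (mulA N a b) = (\<Sum>k\<le>m + n. smult (of_nat ((m + n) choose k)) (mulA N ((D ^^ k) a) ((D ^^ (m + n - k)) b)))"
    by (rule der_pow_mul)
  also have "\<dots> = smult (of_nat ((m + n) choose m)) (mulA N ((D ^^ m) a) ((D ^^ (m + n - m)) b))"
  proof (rule sum.remove[THEN trans])
    show "finite {..m + n}" by simp
    show "m \<in> {..m + n}" by simp
    have "smult (of_nat ((m + n) choose k)) (mulA N ((D ^^ k) a) ((D ^^ (m + n - k)) b)) = 0"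
      if "k \<in> {..m + n} - {m}" for k
    proof (cases "k < m")
      case True
      then have "(D ^^ (m + n - k)) b = 0" using der_pow_vanish[OF bn(2)] by simp
      then show ?thesis by simp
    next
      case False
      then have "(D ^^ k) a = 0" using der_pow_vanish[OF am(2)] that by simp
      then show ?thesis by simp
    qed
    then show "smult (of_nat ((m + n) choose m)) (mulA N ((D ^^ m) a) ((D ^^ (m + n - m)) b)) +
        (\<Sum>k\<in>{..m + n} - {m}. smult (of_nat ((m + n) choose k)) (mulA N ((D ^^ k) a) ((D ^^ (m + n - k)) b))) =
        smult (of_nat ((m + n) choose m)) (mulA N ((D ^^ m) a) ((D ^^ (m + n - m)) b))"
      by simp
  qed
  finally have e: "(D ^^ (m + n)) (mulA N a b) = smult (of_nat ((m + n) choose m)) (mulA N ((D ^^ m) a) ((D ^^ n) b))"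
    by simp
  have "(of_nat ((m + n) choose m) :: 'k poly) \<noteq> 0" by (simp del: binomial_eq_0_iff)
  then show ?thesis unfolding e using am(1) bn(1) by (simp add: mulA_eq_0_iff)
qed

lemma deg_exists: "(D ^^ n) a = 0 \<Longrightarrow> a \<noteq> 0 \<Longrightarrow> \<exists>m. (D ^^ m) a \<noteq> 0 \<and> (D ^^ Suc m) a = 0"
proof (induction n)
  case 0 then show ?case by simp
next
  case (Suc n)
  then show ?case by (cases "(D ^^ n) a = 0") auto
qed

lemma lnd_normal:
  assumes lnd: "locally_nilpotent D" and z: "z \<noteq> 0" and dz: "D z = mulA N z w"
  shows "D z = 0"
proof (rule ccontr)
  assume nz: "D z \<noteq> 0"
  then have w: "w \<noteq> 0" using dz by auto
  obtain m where m: "(D ^^ m) z \<noteq> 0" "(D ^^ Suc m) z = 0"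
    using lnd z deg_exists unfolding locally_nilpotent_def by blast
  obtain n where n: "(D ^^ n) w \<noteq> 0" "(D ^^ Suc n) w = 0"
    using lnd w deg_exists unfolding locally_nilpotent_def by blast
  have "(D ^^ (m + n)) (mulA N z w) \<noteq> 0" by (rule der_deg_mul[OF m n])
  moreover have "(D ^^ (m + n)) (mulA N z w) = (D ^^ (Suc (m + n))) z"
    unfolding dz[symmetric] by (simp add: funpow_Suc_right del: funpow.simps)
  moreover have "(D ^^ (Suc (m + n))) z = 0" using der_pow_vanish[OF m(2), of "Suc (m + n)"] by simp
  ultimately show False by simp
qed

end

definition divN :: "nat \<Rightarrow> 'k::field poly poly \<Rightarrow> bool" where
  "divN N v \<longleftrightarrow> (\<exists>e. v = smult (monom 1 N) e)"

lemma divN_add: "divN N a \<Longrightarrow> divN N b \<Longrightarrow> divN N (a + b)"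
  unfolding divN_def by (metis smult_add_right)

lemma divN_0: "divN N 0" unfolding divN_def by (metis smult_0_right)

lemma divN_sum: "(\<And>x. x \<in> A \<Longrightarrow> divN N (f x)) \<Longrightarrow> divN N (sum f A)"
  by (induction A rule: infinite_finite_induct) (auto intro: divN_add divN_0)

lemma divN_smult: "divN N a \<Longrightarrow> divN N (smult p a)"
  unfolding divN_def by (metis smult_smult mult.commute)

lemma divN_Yop: "divN N a \<Longrightarrow> divN N (Yop N a)"
proof -
  assume "divN N a"
  then obtain e where e: "a = smult (monom 1 N) e" unfolding divN_def by blast
  have "Yop N a = smult (monom 1 N) (smult (pderiv (monom 1 N)) e + Yop N e)"
    unfolding e Yop_smult by (simp add: deltaN_def smult_add_right smult_smult)
  then show ?thesis unfolding divN_def by blast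
qed

lemma divN_comm_x_pow: "divN N ((Yop N ^^ j) [:monom 1 1:] - smult (monom 1 1) (monom 1 j))"
proof (induction j)
  case 0 then show ?case by (simp add: divN_0 monom_0)
next
  case (Suc j)
  let ?x = "monom 1 1 :: 'a poly"
  have "(Yop N ^^ Suc j) [:?x:] - smult ?x (monom 1 (Suc j)) =
      Yop N ((Yop N ^^ j) [:?x:] - smult ?x (monom 1 j)) + smult (monom 1 N) (monom 1 j)"
    using Yop_smult[of N ?x "monom 1 j"] Yop_add[of N "(Yop N ^^ j) [:?x:] - smult ?x (monom 1 j)" "smult ?x (monom 1 j)"]
    by (simp add: Yop_monom1 deltaN_def pderiv_monom)
  then show ?case using Suc divN_add divN_Yop unfolding divN_def by metis
qed

lemma divN_comm_x: "divN N (mulA N u xA - mulA N xA u)"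
proof -
  let ?x = "monom 1 1 :: 'a poly"
  have eq: "mulA N u xA - mulA N xA u = (\<Sum>j\<le>degree u. smult (coeff u j) ((Yop N ^^ j) [:?x:] - smult ?x (monom 1 j)))"
  proof -
    have "mulA N xA u = smult ?x (\<Sum>j\<le>degree u. smult (coeff u j) (monom 1 j))"
      by (simp only: mulA_xA_left poly_as_smult_sum[of u, symmetric])
    then show ?thesis
      by (simp add: mulA_eq_rho rho_def xA_def smult_sum_right smult_diff_right sum_subtractf smult_smult mult.commute)
  qed
  show ?thesis unfolding eq by (intro divN_sum divN_smult divN_comm_x_pow)
qed

lemma times_monom11: "(v::'a::comm_semiring_1 poly) * monom 1 1 = pCons 0 v"
  by (simp add: monom_Suc monom_0 one_pCons[symmetric])

lemma divN_comm_y: "divN N (mulA N yA v - mulA N v yA)"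
proof -
  have "mulA N yA v - mulA N v yA = smult (monom 1 N) (map_poly pderiv v)"
    unfolding mulA_yA_left mulA_yA_right times_monom11
    by (simp add: poly_eq_iff coeff_Yop coeff_map_poly deltaN_def coeff_monom_mult coeff_pCons')
  then show ?thesis unfolding divN_def by blast
qed

lemma rel_xy: "mulA N yA xA - mulA N xA yA = [:monom 1 N:]"
  apply (simp only: mulA_yA_left mulA_xA_left)
  apply (simp add: xA_def Yop_const yA_def smult_monom deltaN_def pderiv_monom)
  done


lemma der_rel:
  assumes der: "is_derivation N D"
  shows "D [:monom 1 N:] = (mulA N (D yA) xA - mulA N xA (D yA)) + (mulA N yA (D xA) - mulA N (D xA) yA)"
  unfolding rel_xy[of N, symmetric] der_diff[OF der] der_mul[OF der] by (simp add: algebra_simps)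

lemma lnd_classify:
  fixes D :: "'k::field_char_0 poly poly \<Rightarrow> 'k poly poly"
  assumes N: "N \<ge> 1" and der: "is_derivation N D" and lnd: "locally_nilpotent D"
  shows "D = dg N (coeff (D yA) 0)"
proof -
  let ?z = "[:monom 1 N:] :: 'k poly poly"
  have "divN N (D ?z)" unfolding der_rel[OF der]
    by (intro divN_add divN_comm_x divN_comm_y)
  then obtain e where e: "D ?z = smult (monom 1 N) e" unfolding divN_def by blast
  have Dz: "D ?z = 0"
    by (rule lnd_normal[OF der lnd, of _ e]) (simp_all add: e mulA_const_left)
  have Dx: "D xA = 0"
  proof (rule ccontr)
    assume nx: "D xA \<noteq> 0"
    have "xA \<noteq> (0::'k poly poly)" by (simp add: xA_def)
    then obtain m where m: "(D ^^ m) xA \<noteq> 0" "(D ^^ Suc m) xA = 0"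
      using lnd deg_exists[OF der] unfolding locally_nilpotent_def by blast
    have m0: "m \<noteq> 0" using m nx by (cases m) auto
    let ?p = "[:monom 1 (N - 1):] :: 'k poly poly"
    have "?p \<noteq> 0" by simp
    then obtain n where n: "(D ^^ n) ?p \<noteq> 0" "(D ^^ Suc n) ?p = 0"
      using lnd deg_exists[OF der] unfolding locally_nilpotent_def by blast
    have zp: "mulA N ?p xA = ?z"
      using N by (simp add: mulA_const_left xA_def mult_monom)
    have "(D ^^ (n + m)) ?z \<noteq> 0" using der_deg_mul[OF der n m] zp by simp
    moreover have "(D ^^ Suc 0) ?z = 0" using Dz by simp
    then have "(D ^^ (n + m)) ?z = 0" using der_pow_vanish[OF der, of 0 ?z "n + m"] m0 by simp
    ultimately show False by simp
  qed
  let ?g = "coeff (D yA) 0"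
  have "mulA N (D yA) xA - mulA N xA (D yA) = 0"
    using der_rel[OF der] Dz Dx by simp
  then have "D yA = [:?g:]" by (intro comm_x_const) simp
  then have "D = Dg0 N ?g"
    by (intro der_ext[OF der Dg0_der]) (simp_all add: Dx Dg0_x Dg0_y)
  then show ?thesis by (simp add: dg_eq)
qed

theorem proposition2p8:
  fixes N :: nat
  assumes "N \<ge> 1"
  shows "(\<forall>g :: 'k::field_char_0 poly.
            (\<exists>!D. is_derivation N D \<and> D xA = 0 \<and> D yA = [:g:]) \<and>
            locally_nilpotent (dg N g) \<and>
            (inner_derivation N (dg N g) \<longleftrightarrow> monom 1 N dvd g) \<and>
            (\<forall>t. expA t (dg N g) = phiA N (smult t g) 1)) \<and>
         (\<forall>D :: 'k poly poly \<Rightarrow> 'k poly poly.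
            is_derivation N D \<and> locally_nilpotent D \<longrightarrow> (\<exists>!g. D = dg N g))"
proof (intro conjI allI impI)
  fix g :: "'k poly"
  show "\<exists>!D. is_derivation N D \<and> D xA = 0 \<and> D yA = [:g:]" by (rule dg_unique)
  show "locally_nilpotent (dg N g)" by (simp add: dg_eq Dg0_lnd)
  show "inner_derivation N (dg N g) \<longleftrightarrow> monom 1 N dvd g" by (rule inner_iff)
  fix t
  show "expA t (dg N g) = phiA N (smult t g) 1"
    by (rule ext) (simp add: expA_eq phi_eq)
next
  fix D :: "'k poly poly \<Rightarrow> 'k poly poly"
  assume "is_derivation N D \<and> locally_nilpotent D"
  then have D: "D = dg N (coeff (D yA) 0)" using lnd_classify assms by blast
  show "\<exists>!g. D = dg N g"
  proof (rule ex1I[of _ "coeff (D yA) 0"])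
    show "D = dg N (coeff (D yA) 0)" by (rule D)
    fix g assume "D = dg N g"
    then have "[:g:] = [:coeff (D yA) 0:]" using D by (metis dg_eq Dg0_y)
    then show "g = coeff (D yA) 0" by simp
  qed
qed

end
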